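(* Let $p$ be an even integer, $q\ge1$, $W\ge q$, and $a=1-1/W$. Consider the following random $p\times q$ matrix $A$: for each $i\in[p/2]$ choose $j\in[q]$ uniformly at random and set $A_{i+p/2}=A_i=ae_j+b(\mathbf{1}_q-e_j)$, where $b\ge 0$ is chosen so that $\|A_i\|_2=1$ (a YES instance). With probability $1/2$, transform $A$ into a NO instance: choose $i^*\in[p/2]$ uniformly at random and, if $A_{i^*}=ae_{j^*}+b(\mathbf{1}_q-e_{j^*})$, set $A_{i^*+p/2}=-ae_{j^*}+b(\mathbf{1}_q-e_{j^*})$. If a deterministic algorithm reads at most $s$ positions of $A$ and distinguishes YES and NO instances with probability at least $2/3$ (over this distribution), then $s=\Omega(pq)$.
   Context: $e_j$ is the $j$-th standard unit vector in $\mathbb{R}^q$, $\mathbf{1}_q$ the all-ones vector. *)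

theory Defs
  imports Complex_Main "HOL-Library.FuncSet"
begin

text \<open>Matrices are functions nat => nat => real; row i, column k (0-indexed).
  A p x q matrix has rows 0..<p and columns 0..<q; entries outside are 0.\<close>

text \<open>Deterministic (adaptive) query algorithms = decision trees: at each inner node
  the algorithm reads position (i,k) of the matrix and branches on the value read;
  a leaf outputs True (= YES) or False (= NO).\<close>
datatype qtree = Leaf bool | Query nat nat "real \<Rightarrow> qtree"

primrec run :: "qtree \<Rightarrow> (nat \<Rightarrow> nat \<Rightarrow> real) \<Rightarrow> bool" where
  "run (Leaf b) A = b"
| "run (Query i k f) A = run (f (A i k)) A"

primrec queried :: "qtree \<Rightarrow> (nat \<Rightarrow> nat \<Rightarrow> real) \<Rightarrow> (nat \<times> nat) set" where
  "queried (Leaf b) A = {}"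
| "queried (Query i k f) A = insert (i, k) (queried (f (A i k)) A)"

definition coef_a :: "real \<Rightarrow> real" where
  "coef_a W = 1 - 1 / W"

text \<open>b >= 0 with a^2 + (q-1) b^2 = 1, i.e. the row a e_j + b(1_q - e_j) has unit norm.\<close>
definition coef_b :: "nat \<Rightarrow> real \<Rightarrow> real" where
  "coef_b q W = sqrt ((1 - (coef_a W)\<^sup>2) / (real q - 1))"

definition row_vec :: "nat \<Rightarrow> real \<Rightarrow> nat \<Rightarrow> nat \<Rightarrow> real" where
  "row_vec q W j k = (if k < q then (if k = j then coef_a W else coef_b q W) else 0)"

text \<open>Index choices J : [p/2] -> [q], with m = p/2.\<close>
definition choices :: "nat \<Rightarrow> nat \<Rightarrow> (nat \<Rightarrow> nat) set" where
  "choices m q = PiE {0..<m} (\<lambda>_. {0..<q})"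

text \<open>YES instance: rows i and i+m both equal a e_{J i} + b(1 - e_{J i}).\<close>
definition yes_mat :: "nat \<Rightarrow> nat \<Rightarrow> real \<Rightarrow> (nat \<Rightarrow> nat) \<Rightarrow> nat \<Rightarrow> nat \<Rightarrow> real" where
  "yes_mat m q W J i k = (if i < 2 * m then row_vec q W (J (i mod m)) k else 0)"

definition no_mat :: "nat \<Rightarrow> nat \<Rightarrow> real \<Rightarrow> (nat \<Rightarrow> nat) \<Rightarrow> nat \<Rightarrow> nat \<Rightarrow> nat \<Rightarrow> real" where
  "no_mat m q W J i0 i k =
     (if i = i0 + m \<and> k = J i0 \<and> k < q then - coef_a W else yes_mat m q W J i k)"

text \<open>Probability (over the hard distribution, YES/NO each with probability 1/2,
  J uniform, i0 uniform and independent) that the algorithm answers correctly.\<close>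
definition success_prob :: "qtree \<Rightarrow> nat \<Rightarrow> nat \<Rightarrow> real \<Rightarrow> real" where
  "success_prob T m q W =
     1/2 * (real (card {J \<in> choices m q. run T (yes_mat m q W J)}) / real (card (choices m q)))
   + 1/2 * (real (card {(J, i0) \<in> choices m q \<times> {0..<m}. \<not> run T (no_mat m q W J i0)})
            / real (card (choices m q \<times> {0..<m})))"

end

theory Submission
  imports Defs
begin


lemma finite_queried: "finite (queried T A)"
  by (induction T) auto

lemma run_diff:
  assumes "\<forall>r k. (r,k) \<notin> P \<longrightarrow> M r k = M' r k" "run T M \<noteq> run T M'"
  shows "queried T M \<inter> P \<noteq> {}"
  using assms
proof (induction T)
  case (Leaf b) then show ?case by simp
next
  case (Query r k f)
  show ?case
  proof (cases "(r,k) \<in> P")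
    case True then show ?thesis by simp
  next
    case False
    then have "M r k = M' r k" using Query.prems by auto
    then show ?thesis using Query.prems Query.IH[OF rangeI[of f "M r k"]] by auto
  qed
qed

lemma key:
  fixes M :: "nat \<Rightarrow> nat \<Rightarrow> nat \<Rightarrow> real"
  assumes "finite S" "\<forall>j\<in>S. \<forall>r k. (r \<notin> Rw \<or> k \<noteq> j) \<longrightarrow> M j r k = M0 r k"
  shows "card {j\<in>S. queried T (M j) \<inter> (Rw \<times> {j}) \<noteq> {}} * (card {j\<in>S. queried T (M j) \<inter> (Rw \<times> {j}) \<noteq> {}} + 1)
     \<le> 2 * (\<Sum>j\<in>S. card (queried T (M j) \<inter> (Rw \<times> S)))"
  using assms
proof (induction T arbitrary: S)
  case (Leaf b) then show ?case by simp
next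
  case (Query r k f)
  define v where "v = M0 r k"
  show ?case
  proof (cases "r \<in> Rw \<and> k \<in> S")
    case True
    define S' where "S' = S - {k}"
    have agree: "\<forall>j\<in>S'. M j r k = v" using Query.prems True by (auto simp: S'_def v_def)
    define H' where "H' = {j\<in>S'. queried (f v) (M j) \<inter> (Rw \<times> {j}) \<noteq> {}}"
    define X where "X = (\<Sum>j\<in>S'. card (queried (f v) (M j) \<inter> (Rw \<times> S')))"
    have fS': "finite S'" using Query.prems by (simp add: S'_def)
    have IH: "card H' * (card H' + 1) \<le> 2 * X"
      unfolding H'_def X_def
      using Query.IH[OF rangeI[of f v], of S'] fS' Query.prems by (auto simp: S'_def)
    have Hsub: "{j\<in>S. queried (Query r k f) (M j) \<inter> (Rw \<times> {j}) \<noteq> {}} \<subseteq> insert k H'"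
    proof
      fix j assume j: "j \<in> {j\<in>S. queried (Query r k f) (M j) \<inter> (Rw \<times> {j}) \<noteq> {}}"
      show "j \<in> insert k H'"
      proof (cases "j = k")
        case True then show ?thesis by simp
      next
        case False
        then have jS': "j \<in> S'" using j by (simp add: S'_def)
        then have "M j r k = v" using agree by blast
        then have "queried (Query r k f) (M j) = insert (r,k) (queried (f v) (M j))" by simp
        then have "queried (f v) (M j) \<inter> (Rw \<times> {j}) \<noteq> {}" using j False by auto
        then show ?thesis using jS' by (simp add: H'_def)
      qed
    qed
    have fH': "finite H'" using fS' by (simp add: H'_def)
    have h1: "card {j\<in>S. queried (Query r k f) (M j) \<inter> (Rw \<times> {j}) \<noteq> {}} \<le> card H' + 1"
    proof -
      have "card {j\<in>S. queried (Query r k f) (M j) \<inter> (Rw \<times> {j}) \<noteq> {}} \<le> card (insert k H')"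
        using Hsub fH' by (intro card_mono) auto
      also have "\<dots> \<le> card H' + 1" using fH' by (simp add: card_insert_if)
      finally show ?thesis .
    qed
    have h2: "card H' \<le> card S'" using fS' by (auto simp: H'_def intro: card_mono)
    have g: "1 + card (queried (f v) (M j) \<inter> (Rw \<times> S')) \<le> card (queried (Query r k f) (M j) \<inter> (Rw \<times> S))"
      if "j \<in> S'" for j
    proof -
      have "insert (r,k) (queried (f v) (M j) \<inter> (Rw \<times> S')) \<subseteq> queried (Query r k f) (M j) \<inter> (Rw \<times> S)"
        using that agree True by (auto simp: S'_def)
      moreover have "(r,k) \<notin> queried (f v) (M j) \<inter> (Rw \<times> S')" by (simp add: S'_def)
      moreover have "finite (queried (Query r k f) (M j) \<inter> (Rw \<times> S))" by (simp add: finite_queried)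
      ultimately show ?thesis
        by (metis card_insert_disjoint card_mono finite_subset plus_1_eq_Suc finite_insert)
    qed
    have gk: "1 \<le> card (queried (Query r k f) (M k) \<inter> (Rw \<times> S))"
    proof -
      have "(r,k) \<in> queried (Query r k f) (M k) \<inter> (Rw \<times> S)" using True by simp
      moreover have "finite (queried (Query r k f) (M k) \<inter> (Rw \<times> S))" by (simp add: finite_queried)
      ultimately have "card (queried (Query r k f) (M k) \<inter> (Rw \<times> S)) > 0"
        using card_gt_0_iff by blast
      then show ?thesis by simp
    qed
    have "(\<Sum>j\<in>S. card (queried (Query r k f) (M j) \<inter> (Rw \<times> S)))
        = card (queried (Query r k f) (M k) \<inter> (Rw \<times> S)) + (\<Sum>j\<in>S'. card (queried (Query r k f) (M j) \<inter> (Rw \<times> S)))"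
      using True Query.prems(1) unfolding S'_def by (intro sum.remove) auto
    moreover have "(\<Sum>j\<in>S'. 1 + card (queried (f v) (M j) \<inter> (Rw \<times> S'))) \<le> (\<Sum>j\<in>S'. card (queried (Query r k f) (M j) \<inter> (Rw \<times> S)))"
      by (rule sum_mono) (rule g)
    moreover have "(\<Sum>j\<in>S'. 1 + card (queried (f v) (M j) \<inter> (Rw \<times> S'))) = card S' + X"
      unfolding X_def by (simp only: sum.distrib) simp
    ultimately have sumge: "1 + card S' + X \<le> (\<Sum>j\<in>S. card (queried (Query r k f) (M j) \<inter> (Rw \<times> S)))"
      using gk by linarith
    define h where "h = card {j\<in>S. queried (Query r k f) (M j) \<inter> (Rw \<times> {j}) \<noteq> {}}"
    have "h * (h + 1) \<le> (card H' + 1) * (card H' + 2)"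
      using h1 unfolding h_def[symmetric] by (intro mult_mono) auto
    also have "\<dots> = card H' * (card H' + 1) + 2 * card H' + 2" by (simp add: algebra_simps)
    also have "\<dots> \<le> 2 * X + 2 * card S' + 2" using IH h2 by linarith
    also have "\<dots> \<le> 2 * (\<Sum>j\<in>S. card (queried (Query r k f) (M j) \<inter> (Rw \<times> S)))" using sumge by linarith
    finally show ?thesis unfolding h_def .
  next
    case False
    have agree: "\<forall>j\<in>S. M j r k = v"
    proof
      fix j assume j: "j \<in> S"
      then have "r \<notin> Rw \<or> k \<noteq> j" using False by auto
      then show "M j r k = v" using Query.prems(2) j unfolding v_def by blast
    qed
    have e1: "\<And>j. j \<in> S \<Longrightarrow> queried (Query r k f) (M j) \<inter> (Rw \<times> S) = queried (f v) (M j) \<inter> (Rw \<times> S)"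
      using agree False by auto
    have e2: "\<And>j. j \<in> S \<Longrightarrow> queried (Query r k f) (M j) \<inter> (Rw \<times> {j}) = queried (f v) (M j) \<inter> (Rw \<times> {j})"
      using agree False by auto
    have "{j\<in>S. queried (Query r k f) (M j) \<inter> (Rw \<times> {j}) \<noteq> {}} = {j\<in>S. queried (f v) (M j) \<inter> (Rw \<times> {j}) \<noteq> {}}"
      using e2 by blast
    moreover have "(\<Sum>j\<in>S. card (queried (Query r k f) (M j) \<inter> (Rw \<times> S))) = (\<Sum>j\<in>S. card (queried (f v) (M j) \<inter> (Rw \<times> S)))"
      using e1 by (intro sum.cong) auto
    ultimately show ?thesis using Query.IH[OF rangeI[of f v], of S] Query.prems by auto
  qed
qed




lemma reindex:
  fixes g :: "(nat \<Rightarrow> nat) \<Rightarrow> real"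
  assumes "i0 \<in> I" "finite I" "finite A"
  shows "(\<Sum>J\<in>PiE I (\<lambda>_. A). g J) = (\<Sum>J'\<in>PiE (I-{i0}) (\<lambda>_. A). \<Sum>j\<in>A. g (J'(i0:=j)))"
proof -
  have eq: "PiE I (\<lambda>_. A) = (\<lambda>(y, h). h(i0 := y)) ` (A \<times> PiE (I-{i0}) (\<lambda>_. A))"
    using PiE_insert_eq[of i0 "I-{i0}" "\<lambda>_. A"] assms(1) by (simp add: insert_absorb)
  have inj: "inj_on (\<lambda>(y, h). h(i0 := y)) (A \<times> PiE (I-{i0}) (\<lambda>_. A))"
    using inj_combinator[of i0 "I-{i0}" "\<lambda>_. A"] by simp
  have "(\<Sum>J\<in>PiE I (\<lambda>_. A). g J) = (\<Sum>x\<in>A \<times> PiE (I-{i0}) (\<lambda>_. A). g ((\<lambda>(y, h). h(i0 := y)) x))"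
    unfolding eq by (rule sum.reindex[OF inj, unfolded comp_def])
  also have "\<dots> = (\<Sum>y\<in>A. \<Sum>h\<in>PiE (I-{i0}) (\<lambda>_. A). g (h(i0 := y)))"
    by (simp add: sum.cartesian_product split_def)
  also have "\<dots> = (\<Sum>h\<in>PiE (I-{i0}) (\<lambda>_. A). \<Sum>y\<in>A. g (h(i0 := y)))"
    by (rule sum.swap)
  finally show ?thesis .
qed

lemma agree_lemma:
  assumes "i0 < m" "j < q"
  shows "\<forall>r k. (r \<notin> {i0, i0+m} \<or> k \<noteq> j) \<longrightarrow> yes_mat m q W (J'(i0:=j)) r k =
     (if r \<in> {i0, i0+m} \<and> k < q then coef_b q W else yes_mat m q W (J'(i0:=0)) r k)"
proof (intro allI impI)
  fix r k assume h: "r \<notin> {i0, i0+m} \<or> k \<noteq> j"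
  show "yes_mat m q W (J'(i0:=j)) r k =
     (if r \<in> {i0, i0+m} \<and> k < q then coef_b q W else yes_mat m q W (J'(i0:=0)) r k)"
  proof (cases "r \<in> {i0, i0+m}")
    case True
    then have "r < 2*m" "r mod m = i0" using assms by auto
    then show ?thesis using True h by (auto simp: yes_mat_def row_vec_def)
  next
    case False
    have "r < 2*m \<Longrightarrow> r mod m \<noteq> i0"
    proof
      assume "r < 2*m" "r mod m = i0"
      then have "r = i0 \<or> r = i0 + m"
        by (metis add.commute le_add_diff_inverse2 mod_if mult_2 nat_add_left_cancel_less
            not_le_imp_less)
      then show False using False by auto
    qed
    then show ?thesis using False by (auto simp: yes_mat_def)
  qed
qed




lemma arith_final:
  fixes cC e qq mm ss P :: real
  assumes h1: "qq / 3 * e - mm * P * qq^2 / 18 \<le> cC * ss" and h2: "P * qq^2 = cC * qq"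
    and h3: "e \<ge> cC * mm / 3" and h4: "cC > 0" and h5: "qq \<ge> 0"
  shows "ss \<ge> mm * qq / 18"
proof -
  have a: "mm * P * qq^2 / 18 = cC * (mm * qq / 18)"
  proof -
    have "mm * P * qq^2 / 18 = mm * (P * qq^2) / 18" by (simp only: mult.assoc)
    also have "\<dots> = mm * (cC * qq) / 18" by (simp only: h2)
    also have "\<dots> = cC * (mm * qq / 18)" by (simp add: field_simps)
    finally show ?thesis .
  qed
  have b: "qq / 3 * (cC * mm / 3) \<le> qq / 3 * e" using h3 h5 by (intro mult_left_mono) auto
  have c: "qq / 3 * (cC * mm / 3) = 2 * (cC * (mm * qq / 18))" by (simp add: field_simps)
  have "cC * (mm * qq / 18) \<le> cC * ss" using h1 a b c by linarith
  then show ?thesis using h4 by (rule mult_left_le_imp_le)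
qed

lemma main_bound:
  assumes m1: "m \<ge> 1" and q1: "q \<ge> 1"
    and sb: "\<forall>A. card (queried T A) \<le> s"
    and sp: "success_prob T m q W \<ge> 2/3"
  shows "real s \<ge> real m * real q / 18"
proof -
  define C where "C = choices m q"
  define I where "I = {0..<m}"
  define Q where "Q = (\<lambda>J. queried T (yes_mat m q W J))"
  have finC: "finite C" unfolding C_def choices_def by (intro finite_PiE) auto
  have cardC: "card C = q ^ m" unfolding C_def choices_def by (simp add: card_PiE)
  have finI: "finite I" and cardI: "card I = m" by (auto simp: I_def)
  define Yset where "Yset = {J\<in>C. run T (yes_mat m q W J)}"
  define Nset where "Nset = {(J, i0) \<in> C \<times> I. \<not> run T (no_mat m q W J i0)}"
  define bad where "bad = {(J, i0) \<in> C \<times> I. run T (yes_mat m q W J) \<noteq> run T (no_mat m q W J i0)}"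
  define E where "E = {(J, i0) \<in> C \<times> I. (i0+m, J i0) \<in> Q J}"
  have finCI: "finite (C \<times> I)" using finC finI by simp
  have Nsub: "Nset \<subseteq> ((C - Yset) \<times> I) \<union> bad"
    unfolding Nset_def Yset_def bad_def by auto
  have "card Nset \<le> card (((C - Yset) \<times> I) \<union> bad)"
  proof -
    have "finite bad" by (rule finite_subset[OF _ finCI]) (auto simp: bad_def)
    moreover have "finite ((C - Yset) \<times> I)" using finC finI by simp
    ultimately show ?thesis using Nsub by (intro card_mono) auto
  qed
  also have "\<dots> \<le> card ((C - Yset) \<times> I) + card bad" by (rule card_Un_le)
  also have "card ((C - Yset) \<times> I) = (card C - card Yset) * m"
    using finC cardI by (simp add: card_cartesian_product card_Diff_subset Yset_def)
  finally have Nle: "card Nset \<le> (card C - card Yset) * m + card bad" .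
  have YleC: "card Yset \<le> card C" using finC by (intro card_mono) (auto simp: Yset_def)
  have qmpos: "real (card C) > 0" using cardC q1 by simp
  have mpos: "real m > 0" using m1 by simp
  have sp': "success_prob T m q W = 1/2 * (real (card Yset) / real (card C)) + 1/2 * (real (card Nset) / (real (card C) * real m))"
    unfolding success_prob_def Yset_def Nset_def C_def I_def
    by (simp add: card_cartesian_product)
  have Nle': "real (card Nset) \<le> (real (card C) - real (card Yset)) * real m + real (card bad)"
  proof -
    have "real (card Nset) \<le> real ((card C - card Yset) * m + card bad)" using Nle by (simp only: of_nat_le_iff)
    also have "\<dots> = (real (card C) - real (card Yset)) * real m + real (card bad)"
      using YleC by (simp add: of_nat_diff)
    finally show ?thesis .
  qed
  have badge: "real (card bad) \<ge> real (card C) * real m / 3"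
  proof -
    have "2/3 \<le> 1/2 * (real (card Yset) / real (card C)) + 1/2 * (real (card Nset) / (real (card C) * real m))"
      using sp sp' by simp
    also have "\<dots> \<le> 1/2 * (real (card Yset) / real (card C)) + 1/2 * (((real (card C) - real (card Yset)) * real m + real (card bad)) / (real (card C) * real m))"
      using Nle' qmpos mpos by (intro add_left_mono mult_left_mono divide_right_mono) auto
    also have "\<dots> = 1/2 + real (card bad) / (2 * real (card C) * real m)"
      using qmpos mpos by (simp add: field_simps)
    finally have "2/3 \<le> 1/2 + real (card bad) / (2 * real (card C) * real m)" .
    then have "1/6 \<le> real (card bad) / (2 * real (card C) * real m)" by linarith
    then show ?thesis using qmpos mpos by (simp add: field_simps)
  qed
  have badE: "bad \<subseteq> E"
  proof
    fix x assume x: "x \<in> bad"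
    obtain J i0 where xe: "x = (J, i0)" by (cases x)
    have JI: "J \<in> C" "i0 \<in> I" and d: "run T (yes_mat m q W J) \<noteq> run T (no_mat m q W J i0)"
      using x xe by (auto simp: bad_def)
    have "\<forall>r k. (r,k) \<notin> {(i0+m, J i0)} \<longrightarrow> yes_mat m q W J r k = no_mat m q W J i0 r k"
      by (auto simp: no_mat_def)
    from run_diff[OF this d] have "(i0+m, J i0) \<in> Q J" by (auto simp: Q_def)
    then show "x \<in> E" using JI xe by (simp add: E_def)
  qed
  have cardE: "real (card E) \<ge> real (card C) * real m / 3"
  proof -
    have "finite E" by (rule finite_subset[OF _ finCI]) (auto simp: E_def)
    then have "card bad \<le> card E" using badE by (intro card_mono)
    then show ?thesis using badge by linarith
  qed
  define cnt where "cnt = (\<lambda>J i0. card (Q J \<inter> ({i0, i0+m} \<times> {0..<q})))"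
  define G where "G = (\<lambda>J (i0::nat). if (i0+m, J i0) \<in> Q J then (1::real) else 0)"
  have cntsum: "(\<Sum>i0\<in>I. real (cnt J i0)) \<le> real s" for J
  proof -
    have disj: "\<forall>i\<in>I. \<forall>j\<in>I. i \<noteq> j \<longrightarrow> (Q J \<inter> ({i, i+m} \<times> {0..<q})) \<inter> (Q J \<inter> ({j, j+m} \<times> {0..<q})) = {}"
      by (auto simp: I_def)
    have "(\<Sum>i0\<in>I. cnt J i0) = card (\<Union>i0\<in>I. Q J \<inter> ({i0, i0+m} \<times> {0..<q}))"
      unfolding cnt_def using finI disj by (subst card_UN_disjoint) (auto simp: finite_queried Q_def)
    also have "\<dots> \<le> card (Q J)" by (intro card_mono) (auto simp: Q_def finite_queried)
    also have "\<dots> \<le> s" using sb by (simp add: Q_def)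
    finally show ?thesis by (metis of_nat_le_iff of_nat_sum)
  qed
  have total_le: "(\<Sum>i0\<in>I. \<Sum>J\<in>C. real (cnt J i0)) \<le> real (card C) * real s"
  proof -
    have "(\<Sum>i0\<in>I. \<Sum>J\<in>C. real (cnt J i0)) = (\<Sum>J\<in>C. \<Sum>i0\<in>I. real (cnt J i0))" by (rule sum.swap)
    also have "\<dots> \<le> (\<Sum>J\<in>C. real s)" by (intro sum_mono cntsum)
    finally show ?thesis by simp
  qed
  have totalG: "(\<Sum>i0\<in>I. \<Sum>J\<in>C. G J i0) = real (card E)"
  proof -
    have Eeq: "E = {x \<in> C \<times> I. (snd x + m, fst x (snd x)) \<in> Q (fst x)}" by (auto simp: E_def)
    have "real (card E) = (\<Sum>x\<in>E. 1)" by simp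
    also have "\<dots> = (\<Sum>x\<in>C \<times> I. if (snd x + m, fst x (snd x)) \<in> Q (fst x) then 1 else 0)"
      unfolding Eeq using finCI by (rule sum.inter_filter)
    also have "\<dots> = (\<Sum>J\<in>C. \<Sum>i0\<in>I. G J i0)"
      by (simp add: sum.cartesian_product G_def split_def)
    also have "\<dots> = (\<Sum>i0\<in>I. \<Sum>J\<in>C. G J i0)" by (rule sum.swap)
    finally show ?thesis by simp
  qed
  have per_row: "(\<Sum>J\<in>C. real (cnt J i0)) \<ge> real q / 3 * (\<Sum>J\<in>C. G J i0) - real (q ^ (m-1)) * (real q)^2 / 18"
    if i0I: "i0 \<in> I" for i0
  proof -
    define C' where "C' = PiE (I - {i0}) (\<lambda>_. {0..<q})"
    have i0m: "i0 < m" using i0I by (simp add: I_def)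
    have cardC': "card C' = q ^ (m-1)" unfolding C'_def using finI i0I cardI
      by (simp add: card_PiE)
    have CC: "C = PiE I (\<lambda>_. {0..<q})" by (simp add: C_def I_def choices_def)
    have r1: "(\<Sum>J\<in>C. real (cnt J i0)) = (\<Sum>J'\<in>C'. \<Sum>j\<in>{0..<q}. real (cnt (J'(i0:=j)) i0))"
      unfolding CC C'_def by (rule reindex[OF i0I finI]) simp
    have r2: "(\<Sum>J\<in>C. G J i0) = (\<Sum>J'\<in>C'. \<Sum>j\<in>{0..<q}. G (J'(i0:=j)) i0)"
      unfolding CC C'_def by (rule reindex[OF i0I finI]) simp
    have pt: "(\<Sum>j\<in>{0..<q}. real (cnt (J'(i0:=j)) i0)) \<ge> real q / 3 * (\<Sum>j\<in>{0..<q}. G (J'(i0:=j)) i0) - (real q)^2 / 18"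
      for J'
    proof -
      define M where "M = (\<lambda>j. yes_mat m q W (J'(i0:=j)))"
      define M0 where "M0 = (\<lambda>r k. if r \<in> {i0, i0+m} \<and> k < q then coef_b q W else yes_mat m q W (J'(i0:=0)) r k)"
      have ag: "\<forall>j\<in>{0..<q}. \<forall>r k. (r \<notin> {i0, i0+m} \<or> k \<noteq> j) \<longrightarrow> M j r k = M0 r k"
      proof
        fix j assume "j \<in> {0..<q}"
        then have "j < q" by simp
        from agree_lemma[OF i0m this, of W J'] show "\<forall>r k. (r \<notin> {i0, i0+m} \<or> k \<noteq> j) \<longrightarrow> M j r k = M0 r k"
          unfolding M_def M0_def .
      qed
      define H where "H = {j\<in>{0..<q}. queried T (M j) \<inter> ({i0, i0+m} \<times> {j}) \<noteq> {}}"
      define Eh where "Eh = {j\<in>{0..<q}. (i0+m, j) \<in> queried T (M j)}"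
      have K: "card H * (card H + 1) \<le> 2 * (\<Sum>j\<in>{0..<q}. card (queried T (M j) \<inter> ({i0, i0+m} \<times> {0..<q})))"
        unfolding H_def by (rule key[OF _ ag]) simp
      have Keq: "(\<Sum>j\<in>{0..<q}. card (queried T (M j) \<inter> ({i0, i0+m} \<times> {0..<q}))) = (\<Sum>j\<in>{0..<q}. cnt (J'(i0:=j)) i0)"
        by (simp add: cnt_def M_def Q_def)
      then have K': "real (card H) * (real (card H) + 1) \<le> 2 * (\<Sum>j\<in>{0..<q}. real (cnt (J'(i0:=j)) i0))"
      proof -
        have "real (card H * (card H + 1)) \<le> real (2 * (\<Sum>j\<in>{0..<q}. cnt (J'(i0:=j)) i0))"
          using K Keq by (simp only: of_nat_le_iff)
        then show ?thesis by (simp add: algebra_simps)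
      qed
      have EH: "card Eh \<le> card H"
      proof (rule card_mono)
        show "finite H" unfolding H_def by simp
        show "Eh \<subseteq> H"
        proof
          fix j assume "j \<in> Eh"
          then have "j \<in> {0..<q}" "(i0+m, j) \<in> queried T (M j) \<inter> ({i0, i0+m} \<times> {j})" by (auto simp: Eh_def)
          then show "j \<in> H" unfolding H_def by blast
        qed
      qed
      have Gs: "(\<Sum>j\<in>{0..<q}. G (J'(i0:=j)) i0) = real (card Eh)"
      proof -
        have "real (card Eh) = (\<Sum>j\<in>Eh. 1)" by simp
        also have "\<dots> = (\<Sum>j\<in>{0..<q}. if (i0+m, j) \<in> queried T (M j) then 1 else 0)"
          unfolding Eh_def by (rule sum.inter_filter) simp
        finally show ?thesis by (simp add: G_def M_def Q_def)
      qed
      define n where "n = real (card Eh)"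
      define h where "h = real (card H)"
      have nh: "n \<le> h" "0 \<le> n" using EH by (auto simp: n_def h_def)
      have "real q / 3 * n - (real q)^2 / 18 \<le> n^2 / 2"
      proof -
        have "0 \<le> (n - real q / 3)^2" by simp
        then show ?thesis by (simp add: power2_eq_square algebra_simps)
      qed
      also have "n^2 / 2 \<le> h * (h + 1) / 2"
      proof -
        have "n * n \<le> h * h" using nh by (intro mult_mono) auto
        then show ?thesis using nh by (simp add: power2_eq_square algebra_simps)
      qed
      also have "\<dots> \<le> (\<Sum>j\<in>{0..<q}. real (cnt (J'(i0:=j)) i0))" using K' by (simp add: h_def)
      finally show ?thesis using Gs by (simp add: n_def)
    qed
    have "(\<Sum>J'\<in>C'. real q / 3 * (\<Sum>j\<in>{0..<q}. G (J'(i0:=j)) i0) - (real q)^2 / 18)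
        \<le> (\<Sum>J'\<in>C'. \<Sum>j\<in>{0..<q}. real (cnt (J'(i0:=j)) i0))"
      by (intro sum_mono pt)
    moreover have "(\<Sum>J'\<in>C'. real q / 3 * (\<Sum>j\<in>{0..<q}. G (J'(i0:=j)) i0) - (real q)^2 / 18)
        = real q / 3 * (\<Sum>J\<in>C. G J i0) - real (q ^ (m-1)) * (real q)^2 / 18"
    proof -
      have "(\<Sum>J'\<in>C'. real q / 3 * (\<Sum>j\<in>{0..<q}. G (J'(i0:=j)) i0) - (real q)^2 / 18)
          = (\<Sum>J'\<in>C'. real q / 3 * (\<Sum>j\<in>{0..<q}. G (J'(i0:=j)) i0)) - (\<Sum>J'\<in>C'. (real q)^2 / 18)"
        by (rule sum_subtractf)
      also have "(\<Sum>J'\<in>C'. real q / 3 * (\<Sum>j\<in>{0..<q}. G (J'(i0:=j)) i0)) = real q / 3 * (\<Sum>J'\<in>C'. \<Sum>j\<in>{0..<q}. G (J'(i0:=j)) i0)"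
        by (rule sum_distrib_left[symmetric])
      also have "(\<Sum>J'\<in>C'. \<Sum>j\<in>{0..<q}. G (J'(i0:=j)) i0) = (\<Sum>J\<in>C. G J i0)"
        by (rule r2[symmetric])
      also have "(\<Sum>J'\<in>C'. (real q)^2 / 18) = real (card C') * ((real q)^2 / 18)"
        by (rule sum_constant)
      also have "real (card C') = real (q ^ (m-1))" by (simp only: cardC')
      finally show ?thesis by (simp only: mult.assoc times_divide_eq_right)
    qed
    ultimately show ?thesis using r1 by linarith
  qed
  have "(\<Sum>i0\<in>I. real q / 3 * (\<Sum>J\<in>C. G J i0) - real (q ^ (m-1)) * (real q)^2 / 18)
      \<le> (\<Sum>i0\<in>I. \<Sum>J\<in>C. real (cnt J i0))"
    by (intro sum_mono per_row)
  moreover have "(\<Sum>i0\<in>I. real q / 3 * (\<Sum>J\<in>C. G J i0) - real (q ^ (m-1)) * (real q)^2 / 18)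
      = real q / 3 * real (card E) - real m * real (q ^ (m-1)) * (real q)^2 / 18"
  proof -
    have "(\<Sum>i0\<in>I. real q / 3 * (\<Sum>J\<in>C. G J i0) - real (q ^ (m-1)) * (real q)^2 / 18)
       = (\<Sum>i0\<in>I. real q / 3 * (\<Sum>J\<in>C. G J i0)) - (\<Sum>i0\<in>I. real (q ^ (m-1)) * (real q)^2 / 18)"
      by (rule sum_subtractf)
    also have "(\<Sum>i0\<in>I. real q / 3 * (\<Sum>J\<in>C. G J i0)) = real q / 3 * (\<Sum>i0\<in>I. \<Sum>J\<in>C. G J i0)"
      by (rule sum_distrib_left[symmetric])
    also have "(\<Sum>i0\<in>I. real (q ^ (m-1)) * (real q)^2 / 18) = real m * (real (q ^ (m-1)) * (real q)^2 / 18)"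
      by (simp only: sum_constant cardI)
    finally have X: "(\<Sum>i0\<in>I. real q / 3 * (\<Sum>J\<in>C. G J i0) - real (q ^ (m-1)) * (real q)^2 / 18)
        = real q / 3 * (\<Sum>i0\<in>I. \<Sum>J\<in>C. G J i0) - real m * (real (q ^ (m-1)) * (real q)^2 / 18)" .
    show ?thesis by (simp only: X totalG mult.assoc times_divide_eq_right)
  qed
  ultimately have main: "real q / 3 * real (card E) - real m * real (q ^ (m-1)) * (real q)^2 / 18 \<le> real (card C) * real s"
    using total_le by linarith
  have pw: "real (q ^ (m-1)) * (real q)^2 = real (card C) * real q"
  proof -
    obtain k where mk: "m = Suc k" using m1 by (cases m) auto
    have "q ^ (m-1) * (q * q) = card C * q" using cardC mk by (simp add: mult.commute mult.left_commute)
    then have "real (q ^ (m-1) * (q * q)) = real (card C * q)" by (rule arg_cong)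
    then show ?thesis by (simp only: of_nat_mult power2_eq_square)
  qed
  show ?thesis by (rule arith_final[OF main pw cardE qmpos]) simp
qed



theorem mainTheorem12:
  "\<exists>c > (0::real). \<forall>(p::nat) (q::nat) (W::real) (T::qtree) (s::nat).
     even p \<and> q \<ge> 1 \<and> W \<ge> real q
     \<and> (\<forall>A. card (queried T A) \<le> s)
     \<and> success_prob T (p div 2) q W \<ge> 2/3
     \<longrightarrow> real s \<ge> c * real p * real q"
proof -
  have "\<forall>(p::nat) (q::nat) (W::real) (T::qtree) (s::nat).
     even p \<and> q \<ge> 1 \<and> W \<ge> real q
     \<and> (\<forall>A. card (queried T A) \<le> s)
     \<and> success_prob T (p div 2) q W \<ge> 2/3
     \<longrightarrow> real s \<ge> 1/36 * real p * real q"
  proof (intro allI impI)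
    fix p q :: nat and W :: real and T :: qtree and s :: nat
    assume h: "even p \<and> q \<ge> 1 \<and> W \<ge> real q \<and> (\<forall>A. card (queried T A) \<le> s)
       \<and> success_prob T (p div 2) q W \<ge> 2/3"
    have ev: "even p" using h by (rule conjunct1)
    have q1: "q \<ge> 1" using h by (elim conjE)
    have sb: "\<forall>A. card (queried T A) \<le> s" using h by (elim conjE)
    have sp: "success_prob T (p div 2) q W \<ge> 2/3" using h by (elim conjE)
    show "real s \<ge> 1/36 * real p * real q"
    proof (cases "p div 2 = 0")
      case True
      then have "p = 0" using ev by presburger
      then show ?thesis by simp
    next
      case False
      then have m1: "p div 2 \<ge> 1" by simp
      have b: "real s \<ge> real (p div 2) * real q / 18" by (rule main_bound[OF m1 q1 sb sp])
      have "p = 2 * (p div 2)" using ev by presburger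
      then have "real p = real (2 * (p div 2))" by (rule arg_cong)
      then have "real p = 2 * real (p div 2)" by simp
      then show ?thesis using b by simp
    qed
  qed
  then show ?thesis by (intro exI[of _ "1/36"]) simp
qed


end
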